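(* Let a project have finite state space $\mathbb{X}$, transition probabilities $p(i,j)$, discount factor $0<\beta\le1$ and horizon $T$. For a tuple $A=(A_1,\dots,A_T)$ of subsets of $\mathbb{X}$ and $1\le d\le T$, $i\in\mathbb{X}$, let $g_d^A(i)=\mathsf{E}_i[\sum_{t=0}^{\tau-1}\beta^t]$ be the expected total discounted time the project is engaged starting in state $i$ with $d$ remaining periods under the stopping rule $\tau$ that, at time $t<d$ engages the project iff $X(t)\in A_{d-t}$, and stops at the first time this fails or when $t=d$; and let $w_d^A(i)=g_d^{A\cup\{(d,i)\}}(i)$, where $A\cup\{(s,j)\}$ denotes the tuple obtained from $A$ by replacing $A_s$ with $A_s\cup\{j\}$. Let $A$ satisfy $A_1\subseteq\dots\subseteq A_T\subseteq\mathbb{X}$. Then for $1\le d\le T$, $i\in\mathbb{X}$: (a) $w_d^A(i)=1+\beta\sum_{j\in A_{d-1}}p(i,j)w_{d-1}^A(j)$ if $d\ge2$, and $w_1^A(i)=1$. (b) $w_d^{A\cup\{(d,i^* )\}}(i)=w_d^A(i)$ for $i^*\in\mathbb{X}\setminus A_d$. (c) $w_d^{A\cup\{(d-1,i^* )\}}(i)=w_d^A(i)+\beta p(i,i^* )w_{d-1}^A(i^* )$ for $i^*\in A_d\setminus A_{d-1}$ (with $d\ge2$). (d) $w_d^{A\cup\{(s,i^* )\}}(i)=1+\beta\sum_{j\in A_{d-1}}p(i,j)w_{d-1}^{A\cup\{(s,i^* )\}}(j)$ for $1\le s\le d-2$ and $i^*\in A_{s+1}\setminus A_s$.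
   Context: $w_d^A(i)$ is the modified work measure: the work measure of the stopping rule with continuation sets $A$, modified so that the project is engaged at least at time 0 in state $i$ with $d$ periods remaining. *)

theory Defs
  imports Complex_Main
begin

text \<open>Transition matrix p. Continuation
  sets A k for k = 1..T (values outside this range are irrelevant).
  A path of length t+1 is a list xs with xs!0 = i; the project is still engaged
  at time t iff xs!s \<in> A (d - s) for all s \<le> t.\<close>

definition path_prob :: "('x \<Rightarrow> 'x \<Rightarrow> real) \<Rightarrow> 'x list \<Rightarrow> real" where
  "path_prob p xs = (\<Prod>s<length xs - 1. p (xs ! s) (xs ! Suc s))"

text \<open>Probability P_i(tau > t) under the stopping rule with continuation sets A,
  d periods remaining.\<close>
definition prob_continue ::
  "('x::finite \<Rightarrow> 'x \<Rightarrow> real) \<Rightarrow> (nat \<Rightarrow> 'x set) \<Rightarrow> nat \<Rightarrow> 'x \<Rightarrow> nat \<Rightarrow> real" where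
  "prob_continue p A d i t =
     (\<Sum>xs\<in>{xs. length xs = Suc t \<and> xs ! 0 = i \<and> (\<forall>s\<le>t. xs ! s \<in> A (d - s))}.
        path_prob p xs)"

text \<open>g_d^A(i) = E_i[sum_{t<tau} beta^t] = sum_{t<d} beta^t P_i(tau > t)
  (tau \<le> d always).\<close>
definition work_g ::
  "('x::finite \<Rightarrow> 'x \<Rightarrow> real) \<Rightarrow> real \<Rightarrow> (nat \<Rightarrow> 'x set) \<Rightarrow> nat \<Rightarrow> 'x \<Rightarrow> real" where
  "work_g p \<beta> A d i = (\<Sum>t<d. \<beta> ^ t * prob_continue p A d i t)"

definition add_pair :: "(nat \<Rightarrow> 'x set) \<Rightarrow> nat \<Rightarrow> 'x \<Rightarrow> (nat \<Rightarrow> 'x set)" where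
  "add_pair A s j = A(s := insert j (A s))"

definition work_w ::
  "('x::finite \<Rightarrow> 'x \<Rightarrow> real) \<Rightarrow> real \<Rightarrow> (nat \<Rightarrow> 'x set) \<Rightarrow> nat \<Rightarrow> 'x \<Rightarrow> real" where
  "work_w p \<beta> A d i = work_g p \<beta> (add_pair A d i) d i"

end

theory Submission
  imports Defs
begin

lemma pp_cons: "ys \<noteq> [] \<Longrightarrow> path_prob p (i#ys) = p i (ys!0) * path_prob p ys"
  by (cases ys) (simp_all add: path_prob_def prod.lessThan_Suc_shift del: prod.lessThan_Suc)

lemma pc_zero: "prob_continue p A d i 0 = (if i \<in> A d then 1 else 0)"
proof -
  have "{xs. length xs = Suc 0 \<and> xs ! 0 = i \<and> (\<forall>s\<le>0. xs ! s \<in> A (d - s))}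
        = (if i \<in> A d then {[i]} else {})"
    by (auto simp: length_Suc_conv)
  then show ?thesis by (simp add: prob_continue_def path_prob_def)
qed

lemma pc_suc: "prob_continue p A (Suc n) i (Suc t) =
   (if i \<in> A (Suc n) then (\<Sum>j\<in>A n. p i j * prob_continue p A n j t) else 0)"
proof -
  define S' where "S' j = {ys. length ys = Suc t \<and> ys ! 0 = j \<and> (\<forall>s\<le>t. ys ! s \<in> A (n - s))}" for j
  define S where "S = {xs. length xs = Suc (Suc t) \<and> xs ! 0 = i \<and> (\<forall>s\<le>Suc t. xs ! s \<in> A (Suc n - s))}"
  have fin: "finite (S' j)" for j
    by (rule finite_subset[OF _ finite_lists_length_eq[of "UNIV::'a set" "Suc t"]]) (auto simp: S'_def)
  show ?thesis
  proof (cases "i \<in> A (Suc n)")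
    case False
    then have "S = {}" by (auto simp: S_def)
    moreover have "prob_continue p A (Suc n) i (Suc t) = sum (path_prob p) S"
      by (simp add: prob_continue_def S_def)
    ultimately show ?thesis using False by simp
  next
    case True
    have eq: "S = (\<lambda>(j,ys). i#ys) ` (SIGMA j:A n. S' j)"
    proof
      show "S \<subseteq> (\<lambda>(j,ys). i#ys) ` (SIGMA j:A n. S' j)"
      proof
        fix xs assume "xs \<in> S"
        then obtain ys where xs: "xs = i # ys" and l: "length ys = Suc t"
          and c: "\<forall>s\<le>Suc t. xs ! s \<in> A (Suc n - s)"
          by (auto simp: S_def length_Suc_conv)
        have "ys ! s \<in> A (n - s)" if "s \<le> t" for s
          using c[rule_format, of "Suc s"] that xs by simp
        moreover have "ys ! 0 \<in> A n" using c[rule_format, of 1] xs by simp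
        ultimately show "xs \<in> (\<lambda>(j,ys). i#ys) ` (SIGMA j:A n. S' j)"
          using xs l by (auto simp: S'_def intro!: image_eqI[of _ _ "(ys!0, ys)"])
      qed
    next
      show "(\<lambda>(j,ys). i#ys) ` (SIGMA j:A n. S' j) \<subseteq> S"
      proof clarify
        fix j ys assume "j \<in> A n" "ys \<in> S' j"
        then show "i # ys \<in> S" using True
          by (auto simp: S_def S'_def nth_Cons split: nat.splits)
      qed
    qed
    have inj: "inj_on (\<lambda>(j,ys). i#ys) (SIGMA j:A n. S' j)"
      by (auto simp: inj_on_def S'_def)
    have "prob_continue p A (Suc n) i (Suc t) = sum (path_prob p) S"
      by (simp add: prob_continue_def S_def)
    also have "\<dots> = (\<Sum>(j,ys)\<in>(SIGMA j:A n. S' j). path_prob p (i#ys))"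
      unfolding eq by (subst sum.reindex[OF inj]) (simp add: case_prod_beta comp_def)
    also have "\<dots> = (\<Sum>j\<in>A n. \<Sum>ys\<in>S' j. path_prob p (i#ys))"
      by (rule sum.Sigma[symmetric]) (auto simp: fin)
    also have "\<dots> = (\<Sum>j\<in>A n. p i j * prob_continue p A n j t)"
    proof (rule sum.cong[OF refl])
      fix j assume "j \<in> A n"
      have "(\<Sum>ys\<in>S' j. path_prob p (i#ys)) = (\<Sum>ys\<in>S' j. p i j * path_prob p ys)"
        by (rule sum.cong[OF refl]) (subst pp_cons, auto simp: S'_def)
      then show "(\<Sum>ys\<in>S' j. path_prob p (i#ys)) = p i j * prob_continue p A n j t"
        by (simp add: sum_distrib_left prob_continue_def S'_def)
    qed
    finally show ?thesis using True by simp
  qed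
qed

lemma wg_suc: "work_g p \<beta> A (Suc n) i =
   (if i \<in> A (Suc n) then 1 + \<beta> * (\<Sum>j\<in>A n. p i j * work_g p \<beta> A n j) else 0)"
proof -
  have "work_g p \<beta> A (Suc n) i = \<beta>^0 * prob_continue p A (Suc n) i 0
     + (\<Sum>t<n. \<beta>^Suc t * prob_continue p A (Suc n) i (Suc t))"
    unfolding work_g_def by (subst sum.lessThan_Suc_shift) simp
  also have "\<dots> = (if i \<in> A (Suc n) then 1 + \<beta> * (\<Sum>j\<in>A n. p i j * work_g p \<beta> A n j) else 0)"
    by (simp add: pc_zero pc_suc work_g_def sum_distrib_left sum_distrib_right
        mult_ac sum.swap[of _ "A n"])
  finally show ?thesis .
qed

lemma wg_local: "(\<And>k. 1 \<le> k \<Longrightarrow> k \<le> n \<Longrightarrow> A k = A2 k) \<Longrightarrow> work_g p \<beta> A n j = work_g p \<beta> A2 n j"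
proof (induction n arbitrary: j)
  case 0 then show ?case by (simp add: work_g_def)
next
  case (Suc n)
  have h: "A (Suc n) = A2 (Suc n)" using Suc.prems by simp
  have "A n = A2 n" if "n \<ge> 1" using Suc.prems that by simp
  have IH: "work_g p \<beta> A n j' = work_g p \<beta> A2 n j'" for j' by (rule Suc.IH) (simp add: Suc.prems)
  show ?case
  proof (cases n)
    case 0
    have "work_g p \<beta> B 0 j' = 0" for B j' by (simp add: work_g_def)
    then show ?thesis using 0 h by (simp add: wg_suc)
  next
    case (Suc m) then have "A n = A2 n" using Suc.prems by simp
    then show ?thesis by (simp add: wg_suc h IH)
  qed
qed

theorem lemma2:
  fixes p :: "'x::finite \<Rightarrow> 'x \<Rightarrow> real" and \<beta> :: real and T d :: nat
    and A :: "nat \<Rightarrow> 'x set" and i :: 'x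
  assumes p_nonneg: "\<And>i j. p i j \<ge> 0"
    and p_stoch: "\<And>i. (\<Sum>j\<in>UNIV. p i j) = 1"
    and beta: "0 < \<beta>" "\<beta> \<le> 1"
    and mono: "\<And>k. 1 \<le> k \<Longrightarrow> k < T \<Longrightarrow> A k \<subseteq> A (Suc k)"
    and d: "1 \<le> d" "d \<le> T"
  shows
    "(d \<ge> 2 \<longrightarrow> work_w p \<beta> A d i
         = 1 + \<beta> * (\<Sum>j\<in>A (d - 1). p i j * work_w p \<beta> A (d - 1) j))
     \<and> (d = 1 \<longrightarrow> work_w p \<beta> A 1 i = 1)
     \<and> (\<forall>istar. istar \<notin> A d \<longrightarrow>
          work_w p \<beta> (add_pair A d istar) d i = work_w p \<beta> A d i)
     \<and> (\<forall>istar. d \<ge> 2 \<longrightarrow> istar \<in> A d - A (d - 1) \<longrightarrow>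
          work_w p \<beta> (add_pair A (d - 1) istar) d i
            = work_w p \<beta> A d i + \<beta> * p i istar * work_w p \<beta> A (d - 1) istar)
     \<and> (\<forall>s istar. 1 \<le> s \<longrightarrow> s + 2 \<le> d \<longrightarrow> istar \<in> A (Suc s) - A s \<longrightarrow>
          work_w p \<beta> (add_pair A s istar) d i
            = 1 + \<beta> * (\<Sum>j\<in>A (d - 1). p i j * work_w p \<beta> (add_pair A s istar) (d - 1) j))"
proof -
  obtain n where dn: "d = Suc n" using d by (cases d) auto
  have wadd: "work_g p \<beta> (add_pair B (Suc n) i) (Suc n) i
      = 1 + \<beta> * (\<Sum>j\<in>B n. p i j * work_g p \<beta> B n j)" for B
  proof -
    have "work_g p \<beta> (add_pair B (Suc n) i) n j = work_g p \<beta> B n j" for j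
      by (rule wg_local) (auto simp: add_pair_def)
    then show ?thesis by (simp add: wg_suc add_pair_def)
  qed
  have wself: "work_w p \<beta> B n j = work_g p \<beta> B n j" if "j \<in> B n" for B j
    using that by (simp add: work_w_def add_pair_def insert_absorb)
  have pa: "d \<ge> 2 \<longrightarrow> work_w p \<beta> A d i
         = 1 + \<beta> * (\<Sum>j\<in>A (d - 1). p i j * work_w p \<beta> A (d - 1) j)"
  proof
    assume "d \<ge> 2"
    then have "n \<ge> 1" using dn by simp
    have "(\<Sum>j\<in>A n. p i j * work_w p \<beta> A n j) = (\<Sum>j\<in>A n. p i j * work_g p \<beta> A n j)"
      by (rule sum.cong) (simp_all add: wself)
    then show "work_w p \<beta> A d i
         = 1 + \<beta> * (\<Sum>j\<in>A (d - 1). p i j * work_w p \<beta> A (d - 1) j)"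
      by (simp add: dn work_w_def wadd)
  qed
  have pb: "d = 1 \<longrightarrow> work_w p \<beta> A 1 i = 1"
    by (simp add: work_w_def work_g_def add_pair_def pc_zero)
  have pc: "\<forall>istar. istar \<notin> A d \<longrightarrow>
          work_w p \<beta> (add_pair A d istar) d i = work_w p \<beta> A d i"
  proof (intro allI impI)
    fix istar
    have "work_g p \<beta> (add_pair A d istar) n j = work_g p \<beta> A n j" for j
      by (rule wg_local) (auto simp: add_pair_def dn)
    moreover have "add_pair A d istar n = A n" by (simp add: add_pair_def dn)
    ultimately show "work_w p \<beta> (add_pair A d istar) d i = work_w p \<beta> A d i"
      by (simp add: work_w_def dn wadd)
  qed
  have pd: "\<forall>istar. d \<ge> 2 \<longrightarrow> istar \<in> A d - A (d - 1) \<longrightarrow>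
          work_w p \<beta> (add_pair A (d - 1) istar) d i
            = work_w p \<beta> A d i + \<beta> * p i istar * work_w p \<beta> A (d - 1) istar"
  proof (intro allI impI)
    fix istar assume "d \<ge> 2" and ist: "istar \<in> A d - A (d - 1)"
    then obtain m where nm: "n = Suc m" using dn by (cases n) auto
    let ?C = "add_pair A n istar"
    have loc: "work_g p \<beta> ?C m j = work_g p \<beta> A m j" for j
      by (rule wg_local) (auto simp: add_pair_def nm)
    have cn: "work_g p \<beta> ?C n j = (if j \<in> A n \<or> j = istar then
        1 + \<beta> * (\<Sum>k\<in>A m. p j k * work_g p \<beta> A m k) else 0)" for j
      by (simp add: nm wg_suc loc[unfolded add_pair_def nm] add_pair_def)
    have an: "work_g p \<beta> A n j = (if j \<in> A n then
        1 + \<beta> * (\<Sum>k\<in>A m. p j k * work_g p \<beta> A m k) else 0)" for j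
      by (simp add: nm wg_suc)
    have ws: "work_w p \<beta> A n istar = 1 + \<beta> * (\<Sum>k\<in>A m. p istar k * work_g p \<beta> A m k)"
    proof -
      have "work_g p \<beta> (add_pair A n istar) m k = work_g p \<beta> A m k" for k
        by (rule wg_local) (auto simp: add_pair_def nm)
      then show ?thesis by (simp add: work_w_def nm wg_suc add_pair_def)
    qed
    have istn: "istar \<notin> A n" using ist dn by simp
    have "work_w p \<beta> ?C d i = 1 + \<beta> * (\<Sum>j\<in>insert istar (A n). p i j * work_g p \<beta> ?C n j)"
      by (simp add: work_w_def dn wadd) (simp add: add_pair_def)
    also have "\<dots> = 1 + \<beta> * (p i istar * work_w p \<beta> A n istar
         + (\<Sum>j\<in>A n. p i j * work_g p \<beta> A n j))"
      using istn by (simp add: cn an ws)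
    also have "\<dots> = work_w p \<beta> A d i + \<beta> * p i istar * work_w p \<beta> A (d - 1) istar"
      by (simp add: work_w_def dn wadd algebra_simps)
    finally show "work_w p \<beta> (add_pair A (d - 1) istar) d i = work_w p \<beta> A d i + \<beta> * p i istar * work_w p \<beta> A (d - 1) istar"
      using dn by simp
  qed
  have pe: "\<forall>s istar. 1 \<le> s \<longrightarrow> s + 2 \<le> d \<longrightarrow> istar \<in> A (Suc s) - A s \<longrightarrow>
          work_w p \<beta> (add_pair A s istar) d i
            = 1 + \<beta> * (\<Sum>j\<in>A (d - 1). p i j * work_w p \<beta> (add_pair A s istar) (d - 1) j)"
  proof (intro allI impI)
    fix s istar assume "1 \<le> s" "s + 2 \<le> d"
    then have sn: "s \<noteq> n" using dn by simp
    have "add_pair A s istar n = A n" using sn by (simp add: add_pair_def)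
    moreover have "work_w p \<beta> (add_pair A s istar) n j = work_g p \<beta> (add_pair A s istar) n j"
      if "j \<in> A n" for j
    proof -
      have e: "(A(s := X))(n := A n) = A(s := X)" for X by (rule ext) (simp add: sn)
      show ?thesis using that sn by (simp add: work_w_def add_pair_def insert_absorb e)
    qed
    ultimately show "work_w p \<beta> (add_pair A s istar) d i
            = 1 + \<beta> * (\<Sum>j\<in>A (d - 1). p i j * work_w p \<beta> (add_pair A s istar) (d - 1) j)"
      by (simp add: work_w_def dn wadd)
  qed
  show ?thesis using pa pb pc pd pe by blast
qed

end
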